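(* Let $G$ be a simple graph with edge set $E(G)=\{e_1,\ldots,e_r\}$ and let $s\geq 1$ be an integer. Then for any product $u=e_{i_1}\cdots e_{i_s}$ of $s$ (not necessarily distinct) edges, we have $$\big(I(G)^{(s+1)}:u\big)=\Big(\big(I(G)^{(2)}:e_{i_1}\big)^{(s)}: e_{i_2}\cdots e_{i_s}\Big).$$
   Context: $S=\mathbb{K}[x_1,\dots,x_n]$ over a field $\mathbb{K}$; vertices of $G$ are the variables and edges are identified with quadratic squarefree monomials. $I(G)$ is the edge ideal generated by the edges. For a squarefree monomial ideal $J$ with irredundant decomposition $J=\mathfrak{p}_1\cap\dots\cap\mathfrak{p}_r$ into monomial primes, $J^{(s)}=\mathfrak{p}_1^s\cap\dots\cap\mathfrak{p}_r^s$; in particular $I(G)^{(s)}=\bigcap_{C\in\mathcal{C}(G)}\mathfrak{p}_C^s$, where $\mathcal{C}(G)$ is the set of minimal vertex covers of $G$ and $\mathfrak{p}_C$ is generated by the variables in $C$. (Note $(I(G)^{(2)}:e)$ is a squarefree monomial ideal, so its symbolic power is defined in this way.) *)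

theory Defs
  imports Main
begin

text \<open>Monomial ideals in S = K[x_v | v in V] are represented by the set of monomials
they contain; a monomial is an exponent vector 'a => nat supported on V, and the
product of monomials is the pointwise sum of exponent vectors.\<close>

definition mons :: "'a set \<Rightarrow> ('a \<Rightarrow> nat) set" where
  "mons V = {m. \<forall>x. x \<notin> V \<longrightarrow> m x = 0}"

definition edge_mon :: "'a set \<Rightarrow> ('a \<Rightarrow> nat)" where
  "edge_mon e = (\<lambda>x. if x \<in> e then 1 else 0)"

definition edges_prod :: "'a set list \<Rightarrow> ('a \<Rightarrow> nat)" where
  "edges_prod es = (\<lambda>x. \<Sum>e\<leftarrow>es. edge_mon e x)"

definition simple_graph :: "'a set \<Rightarrow> 'a set set \<Rightarrow> bool" where
  "simple_graph V E \<longleftrightarrow> finite V \<and> (\<forall>e\<in>E. \<exists>a b. a \<in> V \<and> b \<in> V \<and> a \<noteq> b \<and> e = {a, b})"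

definition edge_ideal :: "'a set \<Rightarrow> 'a set set \<Rightarrow> ('a \<Rightarrow> nat) set" where
  "edge_ideal V E = {m \<in> mons V. \<exists>e\<in>E. \<forall>x\<in>e. 1 \<le> m x}"

definition colon :: "'a set \<Rightarrow> ('a \<Rightarrow> nat) set \<Rightarrow> ('a \<Rightarrow> nat) \<Rightarrow> ('a \<Rightarrow> nat) set" where
  "colon V J u = {m \<in> mons V. (\<lambda>x. m x + u x) \<in> J}"

text \<open>The s-th power of the monomial prime p_C generated by the variables in C.\<close>
definition prime_pow :: "'a set \<Rightarrow> 'a set \<Rightarrow> nat \<Rightarrow> ('a \<Rightarrow> nat) set" where
  "prime_pow V C s = {m \<in> mons V. s \<le> (\<Sum>x\<in>C. m x)}"

definition vertex_cover :: "'a set \<Rightarrow> 'a set set \<Rightarrow> 'a set \<Rightarrow> bool" where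
  "vertex_cover V E C \<longleftrightarrow> C \<subseteq> V \<and> (\<forall>e\<in>E. e \<inter> C \<noteq> {})"

definition min_vertex_cover :: "'a set \<Rightarrow> 'a set set \<Rightarrow> 'a set \<Rightarrow> bool" where
  "min_vertex_cover V E C \<longleftrightarrow> vertex_cover V E C \<and> (\<forall>D. D \<subset> C \<longrightarrow> \<not> vertex_cover V E D)"

definition edge_symb_pow :: "'a set \<Rightarrow> 'a set set \<Rightarrow> nat \<Rightarrow> ('a \<Rightarrow> nat) set" where
  "edge_symb_pow V E s = {m \<in> mons V. \<forall>C. min_vertex_cover V E C \<longrightarrow> m \<in> prime_pow V C s}"

text \<open>For a squarefree monomial ideal these are
exactly the primes of its irredundant primary (prime) decomposition.\<close>
definition contained_in_prime :: "'a set \<Rightarrow> ('a \<Rightarrow> nat) set \<Rightarrow> 'a set \<Rightarrow> bool" where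
  "contained_in_prime V J C \<longleftrightarrow> C \<subseteq> V \<and> (\<forall>m\<in>J. \<exists>x\<in>C. 0 < m x)"

definition min_prime :: "'a set \<Rightarrow> ('a \<Rightarrow> nat) set \<Rightarrow> 'a set \<Rightarrow> bool" where
  "min_prime V J C \<longleftrightarrow> contained_in_prime V J C \<and> (\<forall>D. D \<subset> C \<longrightarrow> \<not> contained_in_prime V J D)"

definition sqfree_symb_pow :: "'a set \<Rightarrow> ('a \<Rightarrow> nat) set \<Rightarrow> nat \<Rightarrow> ('a \<Rightarrow> nat) set" where
  "sqfree_symb_pow V J s = {m \<in> mons V. \<forall>C. min_prime V J C \<longrightarrow> m \<in> prime_pow V C s}"

end

theory Submission
  imports Defs
begin

lemma sum_edge_mon: "finite C \<Longrightarrow> (\<Sum>x\<in>C. edge_mon e x) = card (C \<inter> e)"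
  by (simp add: edge_mon_def sum.If_cases Collect_mem_eq)

lemma edges_prod_Cons: "edges_prod (e#L) x = edge_mon e x + edges_prod L x"
  by (simp add: edges_prod_def)

lemma edges_prod_Nil: "edges_prod [] x = 0"
  by (simp add: edges_prod_def)

lemma sum_edges_prod:
  "finite C \<Longrightarrow> (\<forall>e\<in>set L. e \<inter> C \<noteq> {}) \<Longrightarrow> length L \<le> (\<Sum>x\<in>C. edges_prod L x)"
proof (induction L)
  case Nil then show ?case by simp
next
  case (Cons e L)
  have ne: "C \<inter> e \<noteq> {}" using Cons.prems by auto
  have "finite (C \<inter> e)" using Cons.prems by simp
  then have "card (C \<inter> e) \<ge> 1" using ne by (simp add: Suc_le_eq card_gt_0_iff)
  moreover have "(\<Sum>x\<in>C. edges_prod (e#L) x) = card (C \<inter> e) + (\<Sum>x\<in>C. edges_prod L x)"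
    using Cons.prems by (simp add: edges_prod_Cons sum.distrib sum_edge_mon)
  ultimately show ?case using Cons by simp
qed

lemma edges_prod_mons: "set L \<subseteq> E \<Longrightarrow> \<forall>e\<in>E. e \<subseteq> V \<Longrightarrow> edges_prod L \<in> mons V"
  by (induction L) (auto simp: mons_def edges_prod_Cons edges_prod_Nil edge_mon_def)

lemma card_cov: assumes "a \<noteq> b" "{a,b} \<inter> C \<noteq> {}" shows "card (C \<inter> {a,b}) = (if {a,b} \<subseteq> C then 2 else 1)"
proof (cases "a\<in>C")
  case True
  then show ?thesis
    by (cases "b\<in>C") (use assms in \<open>simp_all add: Int_insert_right\<close>)
next
  case False
  then show ?thesis
    by (cases "b\<in>C") (use assms in \<open>simp_all add: Int_insert_right\<close>)
qed

lemma mvc_finite: "finite V \<Longrightarrow> min_vertex_cover V E C \<Longrightarrow> finite C"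
  unfolding min_vertex_cover_def vertex_cover_def by (meson finite_subset)

lemma J_mem:
  assumes fin: "finite V" and eE: "e \<in> E" and e: "e = {a,b}" "a \<noteq> b" "e \<subseteq> V"
  shows "m \<in> colon V (edge_symb_pow V E 2) (edge_mon e) \<longleftrightarrow>
    m \<in> mons V \<and> (\<forall>C. min_vertex_cover V E C \<and> \<not> e \<subseteq> C \<longrightarrow> (\<exists>x\<in>C. 0 < m x))"
proof -
  have key: "2 \<le> (\<Sum>x\<in>C. m x + edge_mon e x) \<longleftrightarrow> (\<not> e \<subseteq> C \<longrightarrow> (\<exists>x\<in>C. 0 < m x))"
    if C: "min_vertex_cover V E C" for C
  proof -
    have fC: "finite C" using mvc_finite[OF fin C] .
    have "e \<inter> C \<noteq> {}" using C eE unfolding min_vertex_cover_def vertex_cover_def by blast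
    then have cd: "card (C \<inter> e) = (if e \<subseteq> C then 2 else 1)" using card_cov[OF e(2)] e(1) by simp
    have "(\<Sum>x\<in>C. m x + edge_mon e x) = sum m C + card (C \<inter> e)"
      using fC by (simp add: sum.distrib sum_edge_mon)
    moreover have "(sum m C \<ge> 1) \<longleftrightarrow> (\<exists>x\<in>C. 0 < m x)"
    proof -
      have "(sum m C \<ge> 1) \<longleftrightarrow> sum m C \<noteq> 0" by linarith
      also have "\<dots> \<longleftrightarrow> \<not> (\<forall>x\<in>C. m x = 0)" using fC by simp
      also have "\<dots> \<longleftrightarrow> (\<exists>x\<in>C. 0 < m x)" by auto
      finally show ?thesis .
    qed
    ultimately show ?thesis using cd by auto
  qed
  have mon: "m \<in> mons V \<Longrightarrow> (\<lambda>x. m x + edge_mon e x) \<in> mons V"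
    using e(3) by (auto simp: mons_def edge_mon_def)
  show ?thesis
    unfolding colon_def edge_symb_pow_def prime_pow_def
    using key mon by auto
qed

lemma minprime_J:
  assumes fin: "finite V" and eE: "e \<in> E" and e: "e = {a,b}" "a \<noteq> b" "e \<subseteq> V"
  shows "min_prime V (colon V (edge_symb_pow V E 2) (edge_mon e)) D \<longleftrightarrow>
          min_vertex_cover V E D \<and> \<not> e \<subseteq> D"
proof -
  let ?J = "colon V (edge_symb_pow V E 2) (edge_mon e)"
  let ?F = "\<lambda>C. min_vertex_cover V E C \<and> \<not> e \<subseteq> C"
  have cip: "contained_in_prime V ?J D \<longleftrightarrow> D \<subseteq> V \<and> (\<exists>C. ?F C \<and> C \<subseteq> D)" for D
  proof
    assume H: "contained_in_prime V ?J D"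
    show "D \<subseteq> V \<and> (\<exists>C. ?F C \<and> C \<subseteq> D)"
    proof (rule ccontr)
      assume "\<not> ?thesis"
      with H have N: "\<forall>C. ?F C \<longrightarrow> \<not> C \<subseteq> D" and DV: "D \<subseteq> V"
        unfolding contained_in_prime_def by auto
      define m where "m = (\<lambda>x. if x \<in> V - D then 1 else (0::nat))"
      have "m \<in> mons V" by (auto simp: m_def mons_def)
      moreover have "\<forall>C. ?F C \<longrightarrow> (\<exists>x\<in>C. 0 < m x)"
      proof (intro allI impI)
        fix C assume FC: "?F C"
        then obtain x where "x \<in> C" "x \<notin> D" using N by blast
        moreover have "C \<subseteq> V" using FC unfolding min_vertex_cover_def vertex_cover_def by blast
        ultimately show "\<exists>x\<in>C. 0 < m x" by (auto simp: m_def)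
      qed
      ultimately have "m \<in> ?J" using J_mem[OF assms] by blast
      with H obtain x where "x \<in> D" "0 < m x" unfolding contained_in_prime_def by blast
      then show False by (simp add: m_def)
    qed
  next
    assume "D \<subseteq> V \<and> (\<exists>C. ?F C \<and> C \<subseteq> D)"
    then show "contained_in_prime V ?J D"
      unfolding contained_in_prime_def using J_mem[OF assms] by blast
  qed
  show ?thesis
  proof
    assume H: "min_prime V ?J D"
    then obtain C where FC: "?F C" and CD: "C \<subseteq> D" and DV: "D \<subseteq> V"
      unfolding min_prime_def cip by blast
    have "C \<subseteq> V" using CD DV by blast
    then have "contained_in_prime V ?J C" using cip FC by blast
    then have "\<not> C \<subset> D" using H unfolding min_prime_def by blast
    then show "?F D" using FC CD by auto
  next
    assume FD: "?F D"
    then have DV: "D \<subseteq> V" unfolding min_vertex_cover_def vertex_cover_def by blast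
    have "contained_in_prime V ?J D" using cip FD DV by blast
    moreover have "\<not> contained_in_prime V ?J D'" if "D' \<subset> D" for D'
    proof
      assume "contained_in_prime V ?J D'"
      then obtain C where FC: "?F C" and "C \<subseteq> D'" using cip by blast
      then have "C \<subset> D" using that by blast
      then show False using FD FC unfolding min_vertex_cover_def by blast
    qed
    ultimately show "min_prime V ?J D" unfolding min_prime_def by blast
  qed
qed

theorem lemma3p3:
  fixes V :: "'a set" and E :: "'a set set" and s :: nat and es :: "'a set list"
  assumes "simple_graph V E"
    and "1 \<le> s"
    and "length es = s"
    and "set es \<subseteq> E"
  shows "colon V (edge_symb_pow V E (s + 1)) (edges_prod es) =
         colon V (sqfree_symb_pow V (colon V (edge_symb_pow V E 2) (edge_mon (hd es))) s)
                 (edges_prod (tl es))"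
proof -
  have fin: "finite V" using assms(1) unfolding simple_graph_def by blast
  have EV: "\<forall>e\<in>E. e \<subseteq> V"
  proof
    fix e assume "e \<in> E"
    then have "\<exists>a b. a \<in> V \<and> b \<in> V \<and> a \<noteq> b \<and> e = {a, b}"
      using assms(1) unfolding simple_graph_def by simp
    then obtain a b where "a \<in> V" "b \<in> V" "e = {a,b}" by (elim exE conjE) simp
    then show "e \<subseteq> V" by simp
  qed
  obtain e L where es: "es = e # L" using assms(2,3) by (cases es) auto
  have eE: "e \<in> E" and LE: "set L \<subseteq> E" using assms(4) es by auto
  have "\<exists>a b. a \<in> V \<and> b \<in> V \<and> a \<noteq> b \<and> e = {a, b}"
    using assms(1) eE unfolding simple_graph_def by simp
  then obtain a b where ab: "e = {a,b}" "a \<noteq> b" by (elim exE conjE) simp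
  have eV: "e \<subseteq> V" using EV eE by blast
  have lenL: "length L = s - 1" using assms(3) es by simp
  let ?u = "edges_prod L"
  have uV: "?u \<in> mons V" using edges_prod_mons[OF LE EV] .
  have uprod: "edges_prod es = (\<lambda>x. edge_mon e x + ?u x)"
    using es by (simp add: edges_prod_Cons fun_eq_iff)
  have SP: "sqfree_symb_pow V (colon V (edge_symb_pow V E 2) (edge_mon e)) s =
       {m \<in> mons V. \<forall>C. min_vertex_cover V E C \<and> \<not> e \<subseteq> C \<longrightarrow> m \<in> prime_pow V C s}"
    unfolding sqfree_symb_pow_def using minprime_J[OF fin eE ab eV] by auto
  have key: "(s + 1 \<le> (\<Sum>x\<in>C. m x + edges_prod es x)) \<longleftrightarrow>
             (\<not> e \<subseteq> C \<longrightarrow> s \<le> (\<Sum>x\<in>C. m x + ?u x))"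
    if C: "min_vertex_cover V E C" for C m
  proof -
    have fC: "finite C" using mvc_finite[OF fin C] .
    have cov: "\<forall>e\<in>E. e \<inter> C \<noteq> {}" using C unfolding min_vertex_cover_def vertex_cover_def by blast
    then have "e \<inter> C \<noteq> {}" using eE by blast
    then have cd: "card (C \<inter> e) = (if e \<subseteq> C then 2 else 1)" using card_cov[OF ab(2)] ab(1) by simp
    have Lge: "length L \<le> sum ?u C" using sum_edges_prod[OF fC] cov LE by blast
    have "(\<Sum>x\<in>C. m x + edges_prod es x) = card (C \<inter> e) + (\<Sum>x\<in>C. m x + ?u x)"
      using fC by (simp add: uprod sum.distrib sum_edge_mon)
    moreover have "(\<Sum>x\<in>C. m x + ?u x) = sum m C + sum ?u C" by (simp add: sum.distrib)
    ultimately show ?thesis using cd Lge lenL assms(2) by auto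
  qed
  have monu: "m \<in> mons V \<Longrightarrow> (\<lambda>x. m x + f x) \<in> mons V" if "f \<in> mons V" for m f
    using that by (auto simp: mons_def)
  have monu2: "(\<lambda>x. m x + ?u x) \<in> mons V \<Longrightarrow> (\<lambda>x. m x + edges_prod es x) \<in> mons V" for m
    using eV by (auto simp: mons_def uprod edge_mon_def)
  have hd: "hd es = e" and tl: "tl es = L" using es by auto
  show ?thesis
    unfolding hd tl SP
  proof (intro set_eqI iffI)
    fix m assume H: "m \<in> colon V (edge_symb_pow V E (s + 1)) (edges_prod es)"
    then have mV: "m \<in> mons V" and A: "\<forall>C. min_vertex_cover V E C \<longrightarrow> s + 1 \<le> (\<Sum>x\<in>C. m x + edges_prod es x)"
      unfolding colon_def edge_symb_pow_def prime_pow_def by auto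
    have "\<forall>C. min_vertex_cover V E C \<and> \<not> e \<subseteq> C \<longrightarrow> s \<le> (\<Sum>x\<in>C. m x + ?u x)"
      using A key by blast
    then show "m \<in> colon V {m \<in> mons V. \<forall>C. min_vertex_cover V E C \<and> \<not> e \<subseteq> C \<longrightarrow> m \<in> prime_pow V C s} ?u"
      unfolding colon_def prime_pow_def using mV monu[OF uV mV] by simp
  next
    fix m assume H: "m \<in> colon V {m \<in> mons V. \<forall>C. min_vertex_cover V E C \<and> \<not> e \<subseteq> C \<longrightarrow> m \<in> prime_pow V C s} ?u"
    then have mV: "m \<in> mons V" and mu: "(\<lambda>x. m x + ?u x) \<in> mons V"
      and A: "\<forall>C. min_vertex_cover V E C \<and> \<not> e \<subseteq> C \<longrightarrow> s \<le> (\<Sum>x\<in>C. m x + ?u x)"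
      unfolding colon_def prime_pow_def by auto
    have "\<forall>C. min_vertex_cover V E C \<longrightarrow> s + 1 \<le> (\<Sum>x\<in>C. m x + edges_prod es x)"
      using A key by blast
    then show "m \<in> colon V (edge_symb_pow V E (s + 1)) (edges_prod es)"
      unfolding colon_def edge_symb_pow_def prime_pow_def using mV monu2[OF mu] by simp
  qed
qed

end
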